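(* Let $q$ be a prime power and $\mathcal{C}\subseteq(\mathbb{C}^q)^{\otimes n}$ a stabilizer code with stabilizer group $S\subseteq\mathcal{P}_q^n$. Assume that for every $i\in[n]$ there exist stabilizers $P=X^\alpha Z^\beta\in S$ and $Q=X^\gamma Z^\delta\in S$ ($\alpha,\beta,\gamma,\delta\in\mathbb{F}_q^n$) with $|\mathrm{supp}(P)\cup\mathrm{supp}(Q)|\leq r$, $(\alpha_i,\beta_i)=(1,0)$ and $(\gamma_i,\delta_i)=(0,1)$. Then $\mathcal{C}$ is a quantum locally recoverable code with locality $r$.
   Context: Let $\mathbb{F}_q$ have characteristic $p$. For $a\in\mathbb{F}_q$, single-qudit Paulis on $\mathbb{C}^{\mathbb{F}_q}$: $X^a|x\rangle=|x+a\rangle$, $Z^a|x\rangle=e^{(2\pi i/p)\mathrm{tr}_{\mathbb{F}_q/\mathbb{F}_p}(ax)}|x\rangle$. For $\alpha,\beta\in\mathbb{F}_q^n$, $X^\alpha Z^\beta=\bigotimes_{j}X^{\alpha_j}Z^{\beta_j}$; $\mathcal{P}_q^n$ is the group of such operators modulo global phase (identified with $\mathbb{F}_q^{2n}$), and $\mathrm{supp}(X^\alpha Z^\beta)=\{j:(\alpha_j,\beta_j)\neq(0,0)\}$. A stabilizer code is the simultaneous $+1$-eigenspace of an abelian (all elements commuting, including phases) subgroup $S$ of $\mathcal{P}_q^n$ that is an $\mathbb{F}_q$-subspace; $S$ is its stabilizer group. A quantum code on qudits $[n]$ is locally recoverable with locality $r$ if for each $i\in[n]$ there is $I_i\subseteq[n]$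 with $i\in I_i$, $|I_i|\le r$, and a quantum channel $\mathrm{Rec}_i$ from qudits $I_i\setminus\{i\}$ to qudits $I_i$ with $(\mathrm{Rec}_i\otimes\mathrm{id}_{[n]\setminus I_i})(\psi_{[n]\setminus\{i\}})=\psi$ for every code state $\psi$, where $\psi_B$ denotes the reduced density matrix on $B$. *)

theory Defs
  imports "HOL-Analysis.Analysis"
begin

text \<open>The field F_q is a type 'a of class finite and field; its characteristic
p is CHAR('a) and q = CARD('a) = p ^ fdeg.\<close>

definition fdeg :: "'a::{finite,field} itself \<Rightarrow> nat" where
  "fdeg _ = (THE m. CHAR('a) ^ m = CARD('a))"

definition ftr :: "'a::{finite,field} \<Rightarrow> 'a" where
  "ftr x = (\<Sum>k<fdeg TYPE('a). x ^ (CHAR('a) ^ k))"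

definition prime_idx :: "'a::{finite,field} \<Rightarrow> nat" where
  "prime_idx y = (THE k. k < CHAR('a) \<and> of_nat k = y)"

definition chi :: "'a::{finite,field} \<Rightarrow> complex" where
  "chi x = exp (2 * pi * \<i> * of_nat (prime_idx (ftr x)) / of_nat CHAR('a))"

text \<open>Qudits are indexed by a finite type 'n (so n = CARD('n)).
Basis states of the full system are functions 'n \<Rightarrow> 'a; basis states of a
subsystem B are such functions vanishing outside B.\<close>

definition cfg :: "'n set \<Rightarrow> ('n \<Rightarrow> 'a::zero) set" where
  "cfg B = {x. \<forall>j. j \<notin> B \<longrightarrow> x j = 0}"

definition restr :: "'n set \<Rightarrow> ('n \<Rightarrow> 'a::zero) \<Rightarrow> ('n \<Rightarrow> 'a)" where
  "restr B x = (\<lambda>j. if j \<in> B then x j else 0)"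

definition merge :: "'n set \<Rightarrow> ('n \<Rightarrow> 'a) \<Rightarrow> ('n \<Rightarrow> 'a) \<Rightarrow> ('n \<Rightarrow> 'a)" where
  "merge B x z = (\<lambda>j. if j \<in> B then x j else z j)"

text \<open>(X^alpha Z^beta v)(y) = chi(beta . (y - alpha)) v(y - alpha),
 i.e. X^alpha Z^beta |x> = chi(beta . x) |x + alpha>.\<close>
definition pauli :: "('n::finite \<Rightarrow> 'a::{finite,field}) \<times> ('n \<Rightarrow> 'a)
     \<Rightarrow> (('n \<Rightarrow> 'a) \<Rightarrow> complex) \<Rightarrow> (('n \<Rightarrow> 'a) \<Rightarrow> complex)" where
  "pauli P v = (\<lambda>y. chi (\<Sum>j\<in>UNIV. snd P j * (y j - fst P j)) * v (\<lambda>j. y j - fst P j))"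

definition pauli_supp :: "('n \<Rightarrow> 'a::zero) \<times> ('n \<Rightarrow> 'a) \<Rightarrow> 'n set" where
  "pauli_supp P = {j. fst P j \<noteq> 0 \<or> snd P j \<noteq> 0}"

definition stabilizer_group :: "(('n::finite \<Rightarrow> 'a::{finite,field}) \<times> ('n \<Rightarrow> 'a)) set \<Rightarrow> bool" where
  "stabilizer_group S \<longleftrightarrow>
     (\<lambda>_. 0, \<lambda>_. 0) \<in> S \<and>
     (\<forall>P\<in>S. \<forall>Q\<in>S. (\<lambda>j. fst P j + fst Q j, \<lambda>j. snd P j + snd Q j) \<in> S) \<and>
     (\<forall>c. \<forall>P\<in>S. (\<lambda>j. c * fst P j, \<lambda>j. c * snd P j) \<in> S) \<and>
     (\<forall>P\<in>S. \<forall>Q\<in>S. \<forall>v. pauli P (pauli Q v) = pauli Q (pauli P v))"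

definition stab_code :: "(('n::finite \<Rightarrow> 'a::{finite,field}) \<times> ('n \<Rightarrow> 'a)) set
     \<Rightarrow> (('n \<Rightarrow> 'a) \<Rightarrow> complex) set" where
  "stab_code S = {v. \<forall>P\<in>S. pauli P v = v}"

type_synonym ('n, 'a) mat = "('n \<Rightarrow> 'a) \<Rightarrow> ('n \<Rightarrow> 'a) \<Rightarrow> complex"

definition density :: "('n::finite, 'a::{finite,field}) mat \<Rightarrow> bool" where
  "density \<psi> \<longleftrightarrow>
     (\<forall>v. Im (\<Sum>x\<in>UNIV. \<Sum>y\<in>UNIV. cnj (v x) * \<psi> x y * v y) = 0
        \<and> Re (\<Sum>x\<in>UNIV. \<Sum>y\<in>UNIV. cnj (v x) * \<psi> x y * v y) \<ge> 0)
     \<and> (\<Sum>x\<in>UNIV. \<psi> x x) = 1"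

definition code_state :: "(('n \<Rightarrow> 'a) \<Rightarrow> complex) set \<Rightarrow> ('n::finite, 'a::{finite,field}) mat \<Rightarrow> bool" where
  "code_state C \<psi> \<longleftrightarrow> density \<psi> \<and> (\<forall>y. (\<lambda>x. \<psi> x y) \<in> C)"

definition reduced :: "'n set \<Rightarrow> ('n::finite, 'a::{finite,field}) mat \<Rightarrow> ('n, 'a) mat" where
  "reduced B \<psi> = (\<lambda>x y. \<Sum>z\<in>cfg (- B). \<psi> (merge B x z) (merge B y z))"

text \<open>A quantum channel from subsystem A to subsystem B, given in Kraus form:
 operators K (entries K x y, x \<in> cfg B output, y \<in> cfg A input) with
 sum_K K^dagger K = identity on A.\<close>
definition kraus_channel :: "'n set \<Rightarrow> 'n set \<Rightarrow> ('n::finite, 'a::{finite,field}) mat list \<Rightarrow> bool" where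
  "kraus_channel A B Ks \<longleftrightarrow>
     (\<forall>y\<in>cfg A. \<forall>y'\<in>cfg A.
        (\<Sum>K\<leftarrow>Ks. \<Sum>x\<in>cfg B. cnj (K x y) * K x y') = (if y = y' then 1 else 0))"

text \<open>(Rec \<otimes> id_{[n] - I}) applied to a state sigma on [n] - {i}, where Rec
 (channel I - {i} to I) has Kraus operators Ks. Output is a state on [n].\<close>
definition apply_rec :: "'n set \<Rightarrow> 'n \<Rightarrow> ('n::finite, 'a::{finite,field}) mat list
     \<Rightarrow> ('n, 'a) mat \<Rightarrow> ('n, 'a) mat" where
  "apply_rec I i Ks \<sigma> = (\<lambda>x x'.
     \<Sum>K\<leftarrow>Ks. \<Sum>y\<in>cfg (I - {i}). \<Sum>y'\<in>cfg (I - {i}).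
        K (restr I x) y * \<sigma> (merge (I - {i}) y x) (merge (I - {i}) y' x')
          * cnj (K (restr I x') y'))"

definition locally_recoverable :: "(('n::finite \<Rightarrow> 'a::{finite,field}) \<Rightarrow> complex) set \<Rightarrow> nat \<Rightarrow> bool" where
  "locally_recoverable C r \<longleftrightarrow>
     (\<forall>i. \<exists>I. i \<in> I \<and> card I \<le> r \<and>
        (\<exists>Ks. kraus_channel (I - {i}) I Ks \<and>
           (\<forall>\<psi>. code_state C \<psi> \<longrightarrow> apply_rec I i Ks (reduced (- {i}) \<psi>) = \<psi>)))"

end

theory Submission
  imports Defs "HOL-Computational_Algebra.Computational_Algebra" "HOL-Number_Theory.Cong"
begin


lemma char_prime: "prime CHAR('a::{finite,field})"
  by (rule prime_CHAR_semidom) (simp add: finite_imp_CHAR_pos)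

lemma pow_card_same: "(x::'a::{finite,field}) ^ CARD('a) = x"
proof (cases "x = 0")
  case False
  have "x * (\<Prod>y\<in>UNIV-{0}. x * y) = x * x ^ (card (UNIV :: 'a set) - 1) * \<Prod>(UNIV-{0})"
    by (simp add: prod.distrib mult_ac)
  also have "x * x ^ (card (UNIV :: 'a set) - 1) = x ^ Suc (card (UNIV :: 'a set) - 1)"
    by (subst power_Suc) auto
  also have "Suc (card (UNIV :: 'a set) - 1) = card (UNIV :: 'a set)"
    using finite_UNIV_card_ge_0[where ?'a = 'a] by simp
  also have "(\<Prod>y\<in>UNIV-{0}. x * y) = (\<Prod>y\<in>UNIV-{0}. y)"
    by (rule prod.reindex_bij_witness[of _ "\<lambda>y. y / x" "\<lambda>y. x * y"]) (use False in auto)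
  finally show ?thesis
    by simp
qed (use finite_UNIV_card_ge_0[where ?'a = 'a] in auto)

lemma of_nat_mult_closed:
  fixes H :: "'a::{finite,field} set"
  assumes "0 \<in> H" "\<And>a b. a \<in> H \<Longrightarrow> b \<in> H \<Longrightarrow> a + b \<in> H" "h \<in> H"
  shows "of_nat k * h \<in> H"
  by (induction k) (auto simp: assms distrib_right)

lemma ext_step:
  fixes H :: "'a::{finite,field} set"
  assumes H0: "0 \<in> H" and Hadd: "\<And>a b. a \<in> H \<Longrightarrow> b \<in> H \<Longrightarrow> a + b \<in> H"
    and x: "x \<notin> H"
  defines "H' \<equiv> (\<lambda>(h,j). h + of_nat j * x) ` (H \<times> {..<CHAR('a)})"
  shows "0 \<in> H'" "\<And>a b. a \<in> H' \<Longrightarrow> b \<in> H' \<Longrightarrow> a + b \<in> H'"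
    "card H' = card H * CHAR('a)" "H \<subseteq> H'" "x \<in> H'"
proof -
  let ?p = "CHAR('a)"
  have pp: "prime ?p" by (rule char_prime)
  hence p1: "?p > 1" using prime_gt_1_nat by blast
  show "0 \<in> H'" unfolding H'_def using H0 p1 by (auto intro!: image_eqI[of _ _ "(0,0)"])
  show "H \<subseteq> H'" unfolding H'_def using p1 by (auto intro!: image_eqI[of _ _ "(_,0)"])
  show "x \<in> H'" unfolding H'_def using p1 H0 by (auto intro!: image_eqI[of _ _ "(0,1)"])
  show "a + b \<in> H'" if "a \<in> H'" "b \<in> H'" for a b
  proof -
    have "\<exists>h j. a = h + of_nat j * x \<and> h \<in> H" "\<exists>h j. b = h + of_nat j * x \<and> h \<in> H"
      using that unfolding H'_def by auto
    then obtain h1 j1 h2 j2 where a: "a = h1 + of_nat j1 * x" "h1 \<in> H" and b: "b = h2 + of_nat j2 * x" "h2 \<in> H"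
      by blast
    have "of_nat (j1 + j2) = (of_nat ((j1 + j2) mod ?p) :: 'a)"
      by (simp only: of_nat_eq_iff_cong_CHAR) (simp add: cong_def)
    hence "a + b = (h1 + h2) + of_nat ((j1 + j2) mod ?p) * x"
      by (simp add: a b algebra_simps flip: of_nat_add) (metis distrib_left mult.commute of_nat_add)
    moreover have "(j1 + j2) mod ?p < ?p" using p1 by simp
    ultimately show ?thesis unfolding H'_def using a b Hadd
      by (auto intro!: image_eqI[of _ _ "(h1 + h2, (j1 + j2) mod ?p)"])
  qed
  have inj: "inj_on (\<lambda>(h,j). h + of_nat j * x) (H \<times> {..<?p})"
  proof (rule inj_onI, clarsimp)
    fix h1 j1 h2 j2
    assume h: "h1 \<in> H" "h2 \<in> H" "j1 < ?p" "j2 < ?p" and eq: "h1 + of_nat j1 * x = h2 + of_nat j2 * x"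
    have neg: "- h \<in> H" if "h \<in> H" for h
    proof -
      have "of_nat (?p - 1) * h \<in> H" using of_nat_mult_closed[OF H0 Hadd that] .
      moreover have "(of_nat (?p - 1) :: 'a) = - 1"
      proof -
        have e: "?p - 1 + 1 = ?p" using p1 by simp
        have "(of_nat (?p - 1) :: 'a) + 1 = of_nat ?p" by (subst e[symmetric], subst of_nat_add) simp
        thus ?thesis by (simp add: eq_neg_iff_add_eq_0)
      qed
      ultimately show ?thesis by simp
    qed
    have key: "j1 = j2" if h': "h1 \<in> H" "h2 \<in> H" "j1 < ?p" "j2 < ?p" "j2 \<le> j1"
        "h1 + of_nat j1 * x = h2 + of_nat j2 * x" for h1 h2 j1 j2
    proof (rule ccontr)
      assume ne: "j1 \<noteq> j2"
      define d where "d = j1 - j2"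
      have d: "0 < d" "d < ?p" using ne h' unfolding d_def by auto
      have "of_nat d * x = h2 + - h1"
      proof -
        have "of_nat j1 = (of_nat d + of_nat j2 :: 'a)" using h' by (simp add: d_def flip: of_nat_add)
        with h'(6) show ?thesis by (simp add: algebra_simps)
      qed
      hence dx: "of_nat d * x \<in> H" using Hadd[OF _ neg] h' by (metis diff_conv_add_uminus)
      have "\<not> ?p dvd d" using d by (auto dest: dvd_imp_le)
      hence "coprime d ?p" using pp by (metis coprime_commute prime_imp_coprime)
      then obtain e where "[d * e = 1] (mod ?p)" using cong_solve_coprime_nat[of d] by auto
      hence "(of_nat (d * e) :: 'a) = of_nat 1" by (simp only: of_nat_eq_iff_cong_CHAR)
      hence "x = of_nat e * (of_nat d * x)" by (simp add: mult.assoc[symmetric] mult.commute[of "of_nat e"])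
      thus False using of_nat_mult_closed[OF H0 Hadd dx, of e] x by metis
    qed
    show "h1 = h2 \<and> j1 = j2"
    proof -
      have "j1 = j2"
      proof (cases "j2 \<le> j1")
        case True thus ?thesis using key[OF h True eq] by simp
      next
        case False thus ?thesis using key[of h2 h1 j2 j1] h eq by auto
      qed
      thus ?thesis using eq by simp
    qed
  qed
  show "card H' = card H * ?p" unfolding H'_def
    by (subst card_image[OF inj]) (simp add: card_cartesian_product)
qed


lemma card_pow_aux:
  fixes H :: "'a::{finite,field} set"
  assumes "0 \<in> H" "\<And>a b. a \<in> H \<Longrightarrow> b \<in> H \<Longrightarrow> a + b \<in> H" "card H = CHAR('a) ^ k"
  shows "\<exists>m. CARD('a) = CHAR('a) ^ m"
  using assms
proof (induction "card (UNIV - H)" arbitrary: H k rule: less_induct)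
  case less
  show ?case
  proof (cases "H = UNIV")
    case True thus ?thesis using less.prems by auto
  next
    case False
    then obtain x where x: "x \<notin> H" by blast
    define H' where "H' \<equiv> (\<lambda>(h,j). h + of_nat j * x) ` (H \<times> {..<CHAR('a)})"
    note E = ext_step[OF less.prems(1,2) x, folded H'_def]
    have "card (UNIV - H') < card (UNIV - H)"
      using E(4,5) x by (intro psubset_card_mono) auto
    moreover have "card H' = CHAR('a) ^ Suc k" using E(3) less.prems(3) by simp
    ultimately show ?thesis using less.hyps E(1,2) by blast
  qed
qed

lemma card_pow: "\<exists>m. CARD('a::{finite,field}) = CHAR('a) ^ m"
  by (rule card_pow_aux[of "{0}" 0]) auto

lemma fdeg_prop: "CHAR('a::{finite,field}) ^ fdeg TYPE('a) = CARD('a)"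
proof -
  obtain m where m: "CARD('a) = CHAR('a) ^ m" using card_pow by blast
  have p1: "CHAR('a) > 1" using char_prime prime_gt_1_nat by blast
  have "fdeg TYPE('a) = m" unfolding fdeg_def
    by (rule the_equality) (use m p1 power_inject_exp in auto)
  thus ?thesis using m by simp
qed

lemma ftr_add: "ftr ((x::'a::{finite,field}) + y) = ftr x + ftr y"
  unfolding ftr_def
  by (simp add: freshmans_dream'[OF char_prime refl] sum.distrib)

lemma ftr_pow: "ftr (x::'a::{finite,field}) ^ CHAR('a) = ftr x"
proof -
  let ?p = "CHAR('a)" and ?m = "fdeg TYPE('a)"
  define f where "f k = x ^ (?p ^ k)" for k
  have "ftr x ^ ?p = (\<Sum>k<?m. f k ^ ?p)"
    unfolding ftr_def f_def by (rule freshmans_dream_sum[OF char_prime refl])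
  also have "\<dots> = (\<Sum>k<?m. f (Suc k))" by (simp add: f_def power_mult[symmetric] mult.commute)
  also have "\<dots> = (\<Sum>k<?m. f k)"
  proof -
    have "(\<Sum>k<?m. f (Suc k)) + f 0 = (\<Sum>k<Suc ?m. f k)" by (subst sum.lessThan_Suc_shift) (simp add: add.commute)
    also have "\<dots> = (\<Sum>k<?m. f k) + f ?m" by simp
    also have "f ?m = f 0" unfolding f_def by (simp add: fdeg_prop pow_card_same)
    finally show ?thesis by simp
  qed
  finally show ?thesis unfolding ftr_def f_def .
qed

lemma of_nat_pow_char: "(of_nat k :: 'a::{finite,field}) ^ CHAR('a) = of_nat k"
  by (induction k) (simp_all add: freshmans_dream[OF char_prime refl] zero_power prime_gt_0_nat[OF char_prime])

lemma prime_field: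
  assumes "(y::'a::{finite,field}) ^ CHAR('a) = y"
  shows "\<exists>k<CHAR('a). of_nat k = y"
proof -
  let ?p = "CHAR('a)"
  have p1: "?p > 1" using char_prime prime_gt_1_nat by blast
  define pol :: "'a poly" where "pol = monom 1 ?p - [:0,1:]"
  have ev: "poly pol z = z ^ ?p - z" for z unfolding pol_def by (simp add: poly_monom)
  have "coeff pol ?p = 1" unfolding pol_def using p1 by (simp add: coeff_pCons split: nat.split)
  hence nz: "pol \<noteq> 0" by auto
  have deg: "degree pol \<le> ?p" unfolding pol_def
    by (rule order.trans[OF degree_diff_le_max]) (use p1 in \<open>auto simp: degree_monom_le\<close>)
  have R: "card {z. poly pol z = 0} \<le> ?p" using card_poly_roots_bound[OF nz] deg by linarith
  have inj: "inj_on (of_nat :: nat \<Rightarrow> 'a) {..<?p}"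
    by (rule inj_onI) (auto simp: of_nat_eq_iff_cong_CHAR cong_def)
  have sub: "of_nat ` {..<?p} \<subseteq> {z. poly pol z = (0::'a)}"
    by (auto simp: ev of_nat_pow_char)
  have "of_nat ` {..<?p} = {z. poly pol z = (0::'a)}"
  proof (rule card_subset_eq[OF _ sub])
    have "card (of_nat ` {..<?p} :: 'a set) \<le> card {z. poly pol z = (0::'a)}"
      by (rule card_mono[OF _ sub]) simp
    thus "card (of_nat ` {..<?p} :: 'a set) = card {z. poly pol z = (0::'a)}"
      using R card_image[OF inj] by simp
  qed simp
  moreover have "y \<in> {z. poly pol z = 0}" using assms by (simp add: ev)
  ultimately have "y \<in> of_nat ` {..<?p}" by simp
  thus ?thesis by auto
qed

lemma prime_idx_of_nat:
  assumes "k < CHAR('a::{finite,field})"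
  shows "prime_idx (of_nat k :: 'a) = k"
  unfolding prime_idx_def
proof (rule the_equality)
  fix k' assume "k' < CHAR('a) \<and> (of_nat k' :: 'a) = of_nat k"
  thus "k' = k" using assms by (auto simp: of_nat_eq_iff_cong_CHAR cong_def)
qed (use assms in auto)

lemma idx_ftr:
  "prime_idx (ftr (x::'a::{finite,field})) < CHAR('a) \<and> of_nat (prime_idx (ftr x)) = ftr x"
proof -
  obtain k where k: "k < CHAR('a)" "of_nat k = ftr x" using prime_field[OF ftr_pow] by blast
  thus ?thesis using prime_idx_of_nat[OF k(1)] by (metis k(2))
qed

lemma chi_alt: "chi (x::'a::{finite,field}) = exp (2 * of_real pi * \<i> * of_nat (prime_idx (ftr x)) / of_nat CHAR('a))"
  unfolding chi_def by simp

lemma chi_add: "chi ((a::'a::{finite,field}) + b) = chi a * chi b"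
proof -
  let ?p = "CHAR('a)"
  define ka where "ka = prime_idx (ftr a)"
  define kb where "kb = prime_idx (ftr b)"
  define kc where "kc = prime_idx (ftr (a + b))"
  have p0: "?p > 0" using char_prime prime_gt_0_nat by blast
  have "(of_nat kc :: 'a) = of_nat (ka + kb)"
    using idx_ftr[of a] idx_ftr[of b] idx_ftr[of "a+b"] unfolding ka_def kb_def kc_def
    by (simp add: ftr_add)
  hence "kc mod ?p = (ka + kb) mod ?p" by (simp only: of_nat_eq_iff_cong_CHAR cong_def)
  hence "kc = (ka + kb) mod ?p" using idx_ftr[of "a+b"] unfolding kc_def by simp
  hence kk: "ka + kb = kc + ?p * ((ka + kb) div ?p)" by simp
  define t where "t = (ka + kb) div ?p"
  have "chi a * chi b = exp (2 * of_real pi * \<i> * of_nat (ka + kb) / of_nat ?p)"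
    unfolding chi_alt ka_def kb_def by (simp add: exp_add[symmetric] add_divide_distrib distrib_left)
  also have "2 * of_real pi * \<i> * of_nat (ka + kb) / of_nat ?p
      = 2 * of_real pi * \<i> * of_nat kc / of_nat ?p + of_nat t * (2 * of_real pi * \<i>)"
  proof -
    have "(of_nat (ka + kb) :: complex) = of_nat kc + of_nat ?p * of_nat t"
      unfolding t_def by (subst kk) simp
    hence "2 * of_real pi * \<i> * of_nat (ka + kb) / of_nat ?p
      = 2 * of_real pi * \<i> * of_nat kc / of_nat ?p + (2 * of_real pi * \<i>) * (of_nat ?p * of_nat t) / of_nat ?p"
      by (simp add: distrib_left add_divide_distrib)
    also have "(2 * of_real pi * \<i>) * (of_nat ?p * of_nat t) / (of_nat ?p :: complex) = of_nat t * (2 * of_real pi * \<i>)"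
      using p0 by simp
    finally show ?thesis .
  qed
  also have "exp \<dots> = exp (2 * of_real pi * \<i> * of_nat kc / of_nat ?p)"
    by (simp add: exp_add exp_of_nat_mult)
  finally show ?thesis unfolding chi_alt kc_def by simp
qed

lemma ftr_zero: "ftr (0::'a::{finite,field}) = 0"
  unfolding ftr_def using prime_gt_0_nat[OF char_prime[where 'a='a]] by (simp add: power_0_left)

lemma chi_zero: "chi (0::'a::{finite,field}) = 1"
proof -
  have "prime_idx (0::'a) = 0" using prime_idx_of_nat[of 0] prime_gt_0_nat[OF char_prime] by simp
  thus ?thesis unfolding chi_def by (simp add: ftr_zero)
qed

lemma chi_cnj: "chi (x::'a::{finite,field}) * cnj (chi x) = 1"
proof -
  define z where "z = 2 * of_real pi * \<i> * of_nat (prime_idx (ftr x)) / (of_nat CHAR('a) :: complex)"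
  have "Re z = 0" unfolding z_def by simp
  have "cnj z = - z" unfolding z_def by (simp add: complex_eq_iff)
  hence "exp z * cnj (exp z) = exp z * exp (- z)" by (simp add: exp_cnj)
  hence "exp z * cnj (exp z) = 1" by (simp add: exp_minus)
  thus ?thesis unfolding chi_alt z_def .
qed

lemma chi_neg: "chi (- (x::'a::{finite,field})) = cnj (chi x)"
proof -
  have "chi (-x + x) = chi (-x) * chi x" by (rule chi_add)
  hence "chi (-x) * chi x = 1" by (simp add: chi_zero)
  hence "chi (-x) * chi x * cnj (chi x) = cnj (chi x)" by simp
  thus ?thesis using chi_cnj[of x] by (simp add: mult.assoc)
qed



lemma ftr_nonzero: "\<exists>x::'a::{finite,field}. ftr x \<noteq> 0"
proof (rule ccontr)
  assume all: "\<not> (\<exists>x::'a. ftr x \<noteq> 0)"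
  let ?p = "CHAR('a)" and ?m = "fdeg TYPE('a)"
  have p1: "?p > 1" using char_prime[where 'a='a] prime_gt_1_nat by blast
  have q2: "CARD('a) \<ge> 2"
  proof -
    have "{0::'a, 1} \<subseteq> UNIV" by simp
    hence "card {0::'a, 1} \<le> CARD('a)" by (rule card_mono[rotated]) simp
    thus ?thesis by simp
  qed
  have m0: "?m \<noteq> 0" using fdeg_prop[where 'a='a] q2 by (cases "?m") auto
  define pol :: "'a poly" where "pol = (\<Sum>k<?m. monom 1 (?p ^ k))"
  have ev: "poly pol x = ftr x" for x unfolding pol_def ftr_def by (simp add: poly_sum poly_monom)
  have "coeff pol (?p ^ (?m - 1)) = (\<Sum>k<?m. if ?p ^ k = ?p ^ (?m - 1) then 1 else 0)"
    unfolding pol_def by (simp add: coeff_sum coeff_monom)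
  also have "\<dots> = (\<Sum>k<?m. if k = ?m - 1 then 1 else 0)"
    using p1 by (intro sum.cong) (auto simp: power_inject_exp)
  also have "\<dots> = 1" using m0 by simp
  finally have "pol \<noteq> 0" by auto
  hence "card {x. poly pol x = 0} \<le> degree pol" by (rule card_poly_roots_bound)
  also have "degree pol \<le> ?p ^ (?m - 1)" unfolding pol_def
    by (rule degree_sum_le) (use p1 in \<open>auto simp: degree_monom_eq intro!: power_increasing\<close>)
  also have "\<dots> < ?p ^ ?m" using p1 m0 by (intro power_strict_increasing) auto
  also have "\<dots> = CARD('a)" by (rule fdeg_prop)
  also have "{x. poly pol x = 0} = (UNIV :: 'a set)" using all ev by auto
  finally show False by simp
qed

lemma chi_nontriv: "\<exists>a::'a::{finite,field}. chi a \<noteq> 1"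
proof -
  obtain x :: 'a where x: "ftr x \<noteq> 0" using ftr_nonzero by blast
  define k where "k = prime_idx (ftr x)"
  have k: "k < CHAR('a)" "of_nat k = ftr x" using idx_ftr[of x] unfolding k_def by auto
  have k0: "k \<noteq> 0" using k x by (metis of_nat_0)
  have "chi x \<noteq> 1"
  proof
    assume "chi x = 1"
    hence "exp (2 * of_real pi * \<i> * of_nat k / of_nat CHAR('a)) = 1" unfolding chi_alt k_def .
    then obtain n :: int where n: "Im (2 * of_real pi * \<i> * of_nat k / of_nat CHAR('a)) = of_int (2 * n) * pi"
      unfolding exp_eq_1 by blast
    have p0: "CHAR('a) > 0" using char_prime[where 'a='a] prime_gt_0_nat by blast
    have "2 * pi * real k / real CHAR('a) = 2 * real_of_int n * pi" using n by simp
    hence "real k = real_of_int n * real CHAR('a)" using p0 by (simp add: field_simps)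
    hence "int k = n * int CHAR('a)" by (metis of_int_eq_iff of_int_mult of_int_of_nat_eq)
    hence "int CHAR('a) dvd int k" by simp
    hence "CHAR('a) dvd k" by simp
    thus False using k k0 by (auto dest: dvd_imp_le)
  qed
  thus ?thesis by blast
qed

lemma chi_sum: "(\<Sum>c\<in>UNIV. chi (c * (a::'a::{finite,field}))) = (if a = 0 then of_nat CARD('a) else 0)"
proof (cases "a = 0")
  case True thus ?thesis by (simp add: chi_zero)
next
  case False
  have "(\<Sum>c\<in>UNIV. chi (c * a)) = (\<Sum>c\<in>UNIV. chi (c::'a))"
  proof -
    have inj: "inj (\<lambda>c::'a. c * a)" using False by (auto intro: injI)
    have surj: "range (\<lambda>c::'a. c * a) = UNIV"
      using False by (auto intro!: image_eqI[of _ _ "_ / a"])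
    have "(\<Sum>c\<in>UNIV. chi (c::'a)) = (\<Sum>c\<in>range (\<lambda>c::'a. c * a). chi c)" using surj by simp
    also have "\<dots> = (\<Sum>c\<in>UNIV. chi (c * a))" by (simp add: sum.reindex[OF inj])
    finally show ?thesis by simp
  qed
  moreover have "(\<Sum>c\<in>UNIV. chi (c::'a)) = 0"
  proof -
    obtain b :: 'a where b: "chi b \<noteq> 1" using chi_nontriv by blast
    have "(\<Sum>c\<in>UNIV. chi (c::'a)) = (\<Sum>c\<in>UNIV. chi (c + b))"
      by (rule sum.reindex_bij_witness[of _ "\<lambda>c. c + b" "\<lambda>c. c - b"]) auto
    also have "\<dots> = chi b * (\<Sum>c\<in>UNIV. chi (c::'a))" by (simp add: chi_add sum_distrib_left mult.commute)
    finally have "(1 - chi b) * (\<Sum>c\<in>UNIV. chi (c::'a)) = 0" by (simp add: algebra_simps)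
    thus ?thesis using b by simp
  qed
  ultimately show ?thesis using False by simp
qed



lemma finite_cfg[simp]: "finite (cfg (B::'n::finite set) :: ('n \<Rightarrow> 'a::{finite,zero}) set)"
  by (rule finite_subset[OF subset_UNIV]) simp

lemma chi_neg_mult: "chi (- a) * chi (a::'a::{finite,field}) = 1"
  using chi_cnj[of a] by (simp add: chi_neg mult.commute)

definition Kr :: "'n \<Rightarrow> ('n::finite \<Rightarrow> 'a::{finite,field}) \<Rightarrow> ('n \<Rightarrow> 'a) \<Rightarrow> ('n \<Rightarrow> 'a) \<Rightarrow> ('n \<Rightarrow> 'a)
   \<Rightarrow> 'a \<Rightarrow> ('n \<Rightarrow> 'a) \<Rightarrow> ('n \<Rightarrow> 'a) \<Rightarrow> complex" where
  "Kr i \<alpha> \<beta> \<gamma> \<delta> z x u =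
     chi (\<Sum>j\<in>UNIV. ((x i - z) * \<beta> j) * (x j - (x i - z) * \<alpha> j))
       / (of_real (sqrt (real CARD('a))) * of_nat CARD('a))
     * (\<Sum>c\<in>UNIV. chi (c * z + c * (\<Sum>j\<in>UNIV. \<delta> j * u j))
          * (if u = (\<lambda>j. x j - (x i - z) * \<alpha> j - (if j = i then z else 0) - c * \<gamma> j) then 1 else 0))"

context
  fixes I :: "'n::finite set" and i :: 'n and \<alpha> \<beta> \<gamma> \<delta> :: "'n \<Rightarrow> 'a::{finite,field}"
  assumes iI: "i \<in> I" and a1: "\<alpha> i = 1" and b0: "\<beta> i = 0" and g0: "\<gamma> i = 0" and d1: "\<delta> i = 1"
    and out0: "\<forall>j. j \<notin> I \<longrightarrow> \<alpha> j = 0 \<and> \<beta> j = 0 \<and> \<gamma> j = 0 \<and> \<delta> j = 0"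
begin

lemma out: "j \<notin> I \<Longrightarrow> \<alpha> j = 0 \<and> \<beta> j = 0 \<and> \<gamma> j = 0 \<and> \<delta> j = 0"
  using out0 by blast

lemma colA:
  fixes g :: "('n \<Rightarrow> 'a) \<Rightarrow> complex"
  assumes RP: "\<And>c y. g y = chi (\<Sum>j\<in>UNIV. (c * \<beta> j) * (y j - c * \<alpha> j)) * g (\<lambda>j. y j - c * \<alpha> j)"
      and RQ: "\<And>c y. g y = chi (\<Sum>j\<in>UNIV. (c * \<delta> j) * (y j - c * \<gamma> j)) * g (\<lambda>j. y j - c * \<gamma> j)"
  shows "(\<Sum>y\<in>cfg (I - {i}). Kr i \<alpha> \<beta> \<gamma> \<delta> z (restr I x) y * g (merge (-{i}) (merge (I - {i}) y x) t))
        = (if t i = z then g x / of_real (sqrt (real CARD('a))) else 0)"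
proof -
  define X where "X = restr I x"
  define d where "d = x i - z"
  have Xi: "X i = x i" using iI by (simp add: X_def restr_def)
  define N :: complex where "N = of_real (sqrt (real CARD('a))) * of_nat CARD('a)"
  define ph where "ph = chi (\<Sum>j\<in>UNIV. (d * \<beta> j) * (x j - d * \<alpha> j))"
  have ph: "chi (\<Sum>j\<in>UNIV. ((X i - z) * \<beta> j) * (X j - (X i - z) * \<alpha> j)) = ph"
    unfolding ph_def Xi d_def[symmetric]
    by (rule arg_cong[where f=chi], rule sum.cong) (auto simp: X_def restr_def dest: out)
  define yc where "yc c = (\<lambda>j. X j - d * \<alpha> j - (if j = i then z else 0) - c * \<gamma> j)" for c
  define G where "G y = merge (-{i}) (merge (I - {i}) y x) t" for y
  define dt where "dt u = (\<Sum>j\<in>UNIV. \<delta> j * u j)" for u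
  have K: "Kr i \<alpha> \<beta> \<gamma> \<delta> z X y = ph / N * (\<Sum>c\<in>UNIV. chi (c * z + c * dt y) * (if y = yc c then 1 else 0))" for y
    by (simp only: Kr_def ph N_def yc_def dt_def) (simp add: Xi d_def)
  have ycin: "yc c \<in> cfg (I - {i})" for c
    unfolding yc_def cfg_def using out iI by (auto simp: X_def restr_def d_def a1 g0)
  define Y where "Y = (\<lambda>j. x j - d * \<alpha> j + (if j = i then t i - z else 0))"
  have step: "chi (c * z + c * dt (yc c)) * g (G (yc c)) = chi (c * (z - t i)) * g Y" for c
  proof -
    have GY: "G (yc c) = (\<lambda>j. Y j - c * \<gamma> j)"
    proof
      fix j show "G (yc c) j = Y j - c * \<gamma> j"
        using out[of j] by (cases "j = i") (auto simp: G_def merge_def yc_def Y_def X_def restr_def d_def a1 g0)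
    qed
    have E: "(\<Sum>j\<in>UNIV. (c * \<delta> j) * (Y j - c * \<gamma> j)) = c * t i + c * dt (yc c)"
    proof -
      have "(\<Sum>j\<in>UNIV. (c * \<delta> j) * (Y j - c * \<gamma> j))
          = (\<Sum>j\<in>UNIV. (if j = i then c * t i else 0) + c * (\<delta> j * yc c j))"
      proof (rule sum.cong)
        fix j assume "j \<in> (UNIV :: 'n set)"
        show "(c * \<delta> j) * (Y j - c * \<gamma> j) = (if j = i then c * t i else 0) + c * (\<delta> j * yc c j)"
          using out[of j] by (cases "j = i") (auto simp: Y_def yc_def X_def restr_def d_def a1 g0 d1 algebra_simps)
      qed simp
      also have "\<dots> = c * t i + c * dt (yc c)"
        by (simp add: sum.distrib dt_def sum_distrib_left)
      finally show ?thesis .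
    qed
    define A where "A = c * t i + c * dt (yc c)"
    have "g Y = chi A * g (G (yc c))"
      using RQ[of Y c] unfolding GY E A_def .
    hence "chi (- A) * g Y = (chi (- A) * chi A) * g (G (yc c))" by (simp only: mult.assoc)
    hence "chi (- A) * g Y = g (G (yc c))" by (simp only: chi_neg_mult mult_1_left)
    hence "chi (c * z + c * dt (yc c)) * g (G (yc c))
        = (chi (c * z + c * dt (yc c)) * chi (- A)) * g Y"
      by (simp add: mult.assoc)
    also have "chi (c * z + c * dt (yc c)) * chi (- A) = chi (c * (z - t i))"
      by (subst chi_add[symmetric], rule arg_cong[where f=chi]) (simp add: A_def algebra_simps)
    finally show ?thesis .
  qed
  have "(\<Sum>y\<in>cfg (I - {i}). Kr i \<alpha> \<beta> \<gamma> \<delta> z X y * g (G y))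
      = ph / N * (\<Sum>c\<in>UNIV. \<Sum>y\<in>cfg (I - {i}). if y = yc c then chi (c * z + c * dt y) * g (G y) else 0)"
  proof -
    have "(\<Sum>y\<in>cfg (I - {i}). Kr i \<alpha> \<beta> \<gamma> \<delta> z X y * g (G y))
      = (\<Sum>y\<in>cfg (I - {i}). ph / N * (\<Sum>c\<in>UNIV. if y = yc c then chi (c * z + c * dt y) * g (G y) else 0))"
    proof (rule sum.cong)
      fix y
      have "(\<Sum>c\<in>UNIV. chi (c * z + c * dt y) * (if y = yc c then 1 else 0)) * g (G y)
          = (\<Sum>c\<in>UNIV. chi (c * z + c * dt y) * (if y = yc c then 1 else 0) * g (G y))"
        by (rule sum_distrib_right)
      also have "\<dots> = (\<Sum>c\<in>UNIV. if y = yc c then chi (c * z + c * dt y) * g (G y) else 0)"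
        by (rule sum.cong) auto
      finally show "Kr i \<alpha> \<beta> \<gamma> \<delta> z X y * g (G y) = ph / N * (\<Sum>c\<in>UNIV. if y = yc c then chi (c * z + c * dt y) * g (G y) else 0)"
        unfolding K by (simp only: mult.assoc)
    qed simp
    also have "\<dots> = ph / N * (\<Sum>y\<in>cfg (I - {i}). \<Sum>c\<in>UNIV. if y = yc c then chi (c * z + c * dt y) * g (G y) else 0)"
      by (simp only: sum_distrib_left)
    also have "\<dots> = ph / N * (\<Sum>c\<in>UNIV. \<Sum>y\<in>cfg (I - {i}). if y = yc c then chi (c * z + c * dt y) * g (G y) else 0)"
      by (subst sum.swap) (rule refl)
    finally show ?thesis .
  qed
  also have "\<dots> = ph / N * (\<Sum>c\<in>UNIV. chi (c * z + c * dt (yc c)) * g (G (yc c)))"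
    by (simp add: sum.delta ycin)
  also have "\<dots> = ph / N * ((\<Sum>c\<in>UNIV. chi (c * (z - t i))) * g Y)"
    by (simp add: step sum_distrib_right)
  also have "\<dots> = (if t i = z then g x / of_real (sqrt (real CARD('a))) else 0)"
  proof (cases "t i = z")
    case True
    have Y: "Y = (\<lambda>j. x j - d * \<alpha> j)" unfolding Y_def using True by auto
    have gx: "g x = ph * g Y" unfolding ph_def Y using RP[of x d] .
    have q0: "(of_nat CARD('a) :: complex) \<noteq> 0" by simp
    have "ph / N * ((\<Sum>c\<in>UNIV. chi (c * (z - t i))) * g Y) = ph * g Y * of_nat CARD('a) / N"
      using True by (simp add: chi_sum chi_zero)
    also have "\<dots> = g x / of_real (sqrt (real CARD('a)))"
      unfolding N_def gx[symmetric] using q0 by (simp add: field_simps)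
    finally show ?thesis using True by simp
  next
    case False
    hence "z - t i \<noteq> 0" by simp
    thus ?thesis using False by (simp add: chi_sum)
  qed
  finally show ?thesis unfolding X_def G_def .
qed


lemma count_w:
  assumes v: "v \<in> cfg (I - {i})"
  shows "card {x \<in> cfg I. (\<lambda>j. x j - (x i - z) * \<alpha> j - (if j = i then z else 0)) = v} = CARD('a)"
proof -
  define h where "h s = (\<lambda>j. v j + (s - z) * \<alpha> j + (if j = i then z else 0))" for s
  have vi: "v i = 0" and vo: "\<And>j. j \<notin> I \<Longrightarrow> v j = 0" using v by (auto simp: cfg_def)
  have hi: "h s i = s" for s by (simp add: h_def vi a1)
  have inj: "inj h" by (rule injI) (metis hi)
  have img: "range h = {x \<in> cfg I. (\<lambda>j. x j - (x i - z) * \<alpha> j - (if j = i then z else 0)) = v}"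
  proof (intro equalityI subsetI)
    fix x assume "x \<in> range h"
    then obtain s where x: "x = h s" by blast
    have "h s \<in> cfg I" unfolding cfg_def h_def using out vo iI by auto
    moreover have "(\<lambda>j. h s j - (h s i - z) * \<alpha> j - (if j = i then z else 0)) = v"
      by (rule ext) (simp add: h_def vi a1)
    ultimately show "x \<in> {x \<in> cfg I. (\<lambda>j. x j - (x i - z) * \<alpha> j - (if j = i then z else 0)) = v}"
      unfolding x by simp
  next
    fix x assume "x \<in> {x \<in> cfg I. (\<lambda>j. x j - (x i - z) * \<alpha> j - (if j = i then z else 0)) = v}"
    hence w: "(\<lambda>j. x j - (x i - z) * \<alpha> j - (if j = i then z else 0)) = v" by auto
    have "x = h (x i)" unfolding h_def w[symmetric] by (rule ext) simp
    thus "x \<in> range h" by blast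
  qed
  show ?thesis using card_image[OF inj] img by simp
qed

lemma complete:
  assumes y: "y \<in> cfg (I - {i})" and y': "y' \<in> cfg (I - {i})"
  shows "(\<Sum>z\<in>UNIV. \<Sum>x\<in>cfg I. cnj (Kr i \<alpha> \<beta> \<gamma> \<delta> z x y) * Kr i \<alpha> \<beta> \<gamma> \<delta> z x y')
       = (if y = y' then 1 else 0)"
proof -
  define q :: complex where "q = of_nat CARD('a)"
  define N :: complex where "N = of_real (sqrt (real CARD('a))) * q"
  define w where "w z x = (\<lambda>j. x j - (x i - z) * \<alpha> j - (if j = i then (z::'a) else 0))" for z and x :: "'n \<Rightarrow> 'a"
  define dt where "dt u = (\<Sum>j\<in>UNIV. \<delta> j * u j)" for u
  define ph where "ph z x = chi (\<Sum>j\<in>UNIV. ((x i - z) * \<beta> j) * (x j - (x i - z) * \<alpha> j))" for z and x :: "'n \<Rightarrow> 'a"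
  define F where "F z x c c' = chi (z * (c' - c)) * chi (c' * dt y' - c * dt y)
      * (if w z x = (\<lambda>j. y j + c * \<gamma> j) then 1 else 0)
      * (if y' = (\<lambda>j. y j + (c - c') * \<gamma> j) then 1 else (0::complex))" for z x c c'
  have q0: "q \<noteq> 0" unfolding q_def by simp
  have NN: "N * cnj N = q * q * q"
  proof -
    have "of_real (sqrt (real CARD('a))) * of_real (sqrt (real CARD('a))) = (q :: complex)"
      unfolding q_def by (simp flip: of_real_mult)
    thus ?thesis unfolding N_def q_def by (simp add: algebra_simps)
  qed
  have K: "Kr i \<alpha> \<beta> \<gamma> \<delta> z x u = ph z x / N * (\<Sum>c\<in>UNIV. chi (c * z + c * dt u) * (if u = (\<lambda>j. w z x j - c * \<gamma> j) then 1 else 0))"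
    for z x u unfolding Kr_def ph_def N_def q_def dt_def w_def by simp
  have ind: "(u = (\<lambda>j. w z x j - c * \<gamma> j)) \<longleftrightarrow> (w z x = (\<lambda>j. u j + c * \<gamma> j))" for u z x c
    by (auto simp: fun_eq_iff algebra_simps)
  have P1: "cnj (Kr i \<alpha> \<beta> \<gamma> \<delta> z x y) * Kr i \<alpha> \<beta> \<gamma> \<delta> z x y' = (\<Sum>c\<in>UNIV. \<Sum>c'\<in>UNIV. F z x c c') / (N * cnj N)" for z x
  proof -
    have ci: "\<And>P. cnj (if P then 1 else 0 :: complex) = (if P then 1 else 0)" by simp
    have pp: "cnj (ph z x) * ph z x = 1" unfolding ph_def using chi_cnj by (simp add: mult.commute)
    have "cnj (Kr i \<alpha> \<beta> \<gamma> \<delta> z x y) * Kr i \<alpha> \<beta> \<gamma> \<delta> z x y'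
      = (cnj (ph z x) * ph z x) / (N * cnj N) *
        ((\<Sum>c\<in>UNIV. cnj (chi (c * z + c * dt y)) * (if y = (\<lambda>j. w z x j - c * \<gamma> j) then 1 else 0))
        * (\<Sum>c'\<in>UNIV. chi (c' * z + c' * dt y') * (if y' = (\<lambda>j. w z x j - c' * \<gamma> j) then 1 else 0)))"
      unfolding K by (simp add: cnj_sum algebra_simps ci)
    also have "\<dots> = (\<Sum>c\<in>UNIV. \<Sum>c'\<in>UNIV. cnj (chi (c * z + c * dt y)) * (if y = (\<lambda>j. w z x j - c * \<gamma> j) then 1 else 0)
        * (chi (c' * z + c' * dt y') * (if y' = (\<lambda>j. w z x j - c' * \<gamma> j) then 1 else 0))) / (N * cnj N)"
      unfolding pp by (simp add: sum_product)
    also have "\<dots> = (\<Sum>c\<in>UNIV. \<Sum>c'\<in>UNIV. F z x c c') / (N * cnj N)"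
    proof -
      have "cnj (chi (c * z + c * dt y)) * (if y = (\<lambda>j. w z x j - c * \<gamma> j) then 1 else 0)
        * (chi (c' * z + c' * dt y') * (if y' = (\<lambda>j. w z x j - c' * \<gamma> j) then 1 else 0)) = F z x c c'" for c c'
      proof -
        have ch: "cnj (chi (c * z + c * dt y)) * chi (c' * z + c' * dt y') = chi (z * (c' - c)) * chi (c' * dt y' - c * dt y)"
          unfolding chi_neg[symmetric] chi_add[symmetric] by (rule arg_cong[where f=chi]) (simp add: algebra_simps)
        have "(y = (\<lambda>j. w z x j - c * \<gamma> j) \<and> y' = (\<lambda>j. w z x j - c' * \<gamma> j)) \<longleftrightarrow>
              (w z x = (\<lambda>j. y j + c * \<gamma> j) \<and> y' = (\<lambda>j. y j + (c - c') * \<gamma> j))"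
          by (auto simp: fun_eq_iff algebra_simps)
        thus ?thesis unfolding F_def using ch by (auto simp: algebra_simps)
      qed
      thus ?thesis by simp
    qed
    finally show ?thesis .
  qed
  have "(\<Sum>z\<in>UNIV. \<Sum>x\<in>cfg I. cnj (Kr i \<alpha> \<beta> \<gamma> \<delta> z x y) * Kr i \<alpha> \<beta> \<gamma> \<delta> z x y')
      = (\<Sum>z\<in>UNIV. \<Sum>x\<in>cfg I. \<Sum>c\<in>UNIV. \<Sum>c'\<in>UNIV. F z x c c') / (N * cnj N)"
    by (simp add: P1 sum_divide_distrib)
  also have "(\<Sum>z\<in>UNIV. \<Sum>x\<in>cfg I. \<Sum>c\<in>UNIV. \<Sum>c'\<in>UNIV. F z x c c')
      = (\<Sum>c\<in>UNIV. \<Sum>c'\<in>UNIV. \<Sum>z\<in>UNIV. \<Sum>x\<in>cfg I. F z x c c')"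
  proof -
    have "(\<Sum>z\<in>UNIV. \<Sum>x\<in>cfg I. \<Sum>c\<in>UNIV. \<Sum>c'\<in>UNIV. F z x c c')
        = (\<Sum>z\<in>UNIV. \<Sum>c\<in>UNIV. \<Sum>c'\<in>UNIV. \<Sum>x\<in>cfg I. F z x c c')"
    proof (intro sum.cong refl)
      fix z
      have "(\<Sum>x\<in>cfg I. \<Sum>c\<in>UNIV. \<Sum>c'\<in>UNIV. F z x c c') = (\<Sum>c\<in>UNIV. \<Sum>x\<in>cfg I. \<Sum>c'\<in>UNIV. F z x c c')"
        by (rule sum.swap)
      also have "\<dots> = (\<Sum>c\<in>UNIV. \<Sum>c'\<in>UNIV. \<Sum>x\<in>cfg I. F z x c c')"
        by (intro sum.cong refl) (rule sum.swap)
      finally show "(\<Sum>x\<in>cfg I. \<Sum>c\<in>UNIV. \<Sum>c'\<in>UNIV. F z x c c') = (\<Sum>c\<in>UNIV. \<Sum>c'\<in>UNIV. \<Sum>x\<in>cfg I. F z x c c')" .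
    qed
    also have "\<dots> = (\<Sum>c\<in>UNIV. \<Sum>z\<in>UNIV. \<Sum>c'\<in>UNIV. \<Sum>x\<in>cfg I. F z x c c')"
      by (rule sum.swap)
    also have "\<dots> = (\<Sum>c\<in>UNIV. \<Sum>c'\<in>UNIV. \<Sum>z\<in>UNIV. \<Sum>x\<in>cfg I. F z x c c')"
      by (rule sum.cong[OF refl], rule sum.swap)
    finally show ?thesis .
  qed
  also have "\<dots> = (\<Sum>c\<in>UNIV. \<Sum>c'\<in>UNIV. \<Sum>z\<in>UNIV. q * (chi (z * (c' - c)) * chi (c' * dt y' - c * dt y)
      * (if y' = (\<lambda>j. y j + (c - c') * \<gamma> j) then 1 else 0)))"
  proof (intro sum.cong refl)
    fix c c' z
    have yc: "(\<lambda>j. y j + c * \<gamma> j) \<in> cfg (I - {i})" using y out g0 by (auto simp: cfg_def)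
    have "(\<Sum>x\<in>cfg I. F z x c c') = (chi (z * (c' - c)) * chi (c' * dt y' - c * dt y)
      * (if y' = (\<lambda>j. y j + (c - c') * \<gamma> j) then 1 else 0)) * (\<Sum>x\<in>cfg I. if w z x = (\<lambda>j. y j + c * \<gamma> j) then 1 else 0)"
      unfolding F_def sum_distrib_left by (intro sum.cong refl) auto
    also have "(\<Sum>x\<in>cfg I. if w z x = (\<lambda>j. y j + c * \<gamma> j) then 1 else (0::complex)) = q"
    proof -
      have "(\<Sum>x\<in>cfg I. if w z x = (\<lambda>j. y j + c * \<gamma> j) then 1 else (0::complex))
          = of_nat (card {x \<in> cfg I. w z x = (\<lambda>j. y j + c * \<gamma> j)})"
        by (simp add: sum.If_cases) (rule arg_cong[where f=card], blast)
      also have "card {x \<in> cfg I. w z x = (\<lambda>j. y j + c * \<gamma> j)} = CARD('a)"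
        unfolding w_def by (rule count_w[OF yc])
      finally show ?thesis unfolding q_def .
    qed
    finally show "(\<Sum>x\<in>cfg I. F z x c c') = q * (chi (z * (c' - c)) * chi (c' * dt y' - c * dt y)
      * (if y' = (\<lambda>j. y j + (c - c') * \<gamma> j) then 1 else 0))" by (simp add: mult.commute)
  qed
  also have "\<dots> = (\<Sum>c\<in>UNIV. \<Sum>c'\<in>UNIV. q * (\<Sum>z\<in>UNIV. chi (z * (c' - c))) * chi (c' * dt y' - c * dt y)
      * (if y' = (\<lambda>j. y j + (c - c') * \<gamma> j) then 1 else 0))"
    by (simp add: sum_distrib_left sum_distrib_right mult.assoc)
  also have "\<dots> = (\<Sum>c\<in>UNIV. \<Sum>c'\<in>UNIV. if c' = (c::'a) then q * q * (if y' = y then 1 else 0) else 0)"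
  proof -
    have pw: "q * (\<Sum>z\<in>UNIV. chi (z * (c' - c))) * chi (c' * dt y' - c * dt y)
      * (if y' = (\<lambda>j. y j + (c - c') * \<gamma> j) then 1 else 0) = (if c' = c then q * q * (if y' = y then 1 else 0) else 0)" for c c' :: 'a
    proof -
      show "q * (\<Sum>z\<in>UNIV. chi (z * (c' - c))) * chi (c' * dt y' - c * dt y)
      * (if y' = (\<lambda>j. y j + (c - c') * \<gamma> j) then 1 else 0) = (if c' = c then q * q * (if y' = y then 1 else 0) else 0)"
    proof (cases "c' = c")
      case True
      have "(\<lambda>j. y j + (c - c') * \<gamma> j) = y" using True by simp
      moreover have "y' = y \<Longrightarrow> chi (c' * dt y' - c * dt y) = 1" using True by (simp add: chi_zero)
      ultimately show ?thesis using True by (simp add: chi_sum q_def)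
    next
      case False
      thus ?thesis by (simp add: chi_sum)
    qed
    qed
    show ?thesis by (simp only: pw)
  qed
  also have "\<dots> = q * q * q * (if y = y' then 1 else 0)"
    by (simp add: q_def)
  finally show ?thesis using NN q0 by auto
qed
end



lemma sum_ind:
  fixes f :: "'b \<Rightarrow> complex"
  shows "finite A \<Longrightarrow> (\<Sum>y\<in>A. f y * (if y = a then c else 0)) = (if a \<in> A then f a * c else 0)"
proof -
  assume "finite A"
  have "(\<Sum>y\<in>A. f y * (if y = a then c else 0)) = (\<Sum>y\<in>A. if y = a then f y * c else 0)"
    by (rule sum.cong) auto
  thus ?thesis using \<open>finite A\<close> by simp
qed

lemma sum_ind':
  fixes f :: "'b \<Rightarrow> complex"
  shows "finite A \<Longrightarrow> (\<Sum>y\<in>A. (if y = a then c else 0) * f y) = (if a \<in> A then c * f a else 0)"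
  using sum_ind[of A f a c] by (simp add: mult.commute)

lemma qf_two:
  fixes \<psi> :: "('n::finite, 'a::{finite,field}) mat"
  shows "(\<Sum>x\<in>UNIV. \<Sum>y\<in>UNIV. cnj ((\<lambda>w. (if w = a then 1 else 0) + (if w = b then c else 0)) x) * \<psi> x y
           * (\<lambda>w. (if w = a then 1 else 0) + (if w = b then c else 0)) y)
       = \<psi> a a + c * \<psi> a b + cnj c * \<psi> b a + cnj c * c * \<psi> b b"
proof -
  have inner: "(\<Sum>y\<in>UNIV. K * \<psi> x y * ((if y = a then 1 else 0) + (if y = b then c else 0)))
      = K * (\<psi> x a + c * \<psi> x b)" for K x
  proof -
    have "(\<Sum>y\<in>UNIV. K * \<psi> x y * ((if y = a then 1 else 0) + (if y = b then c else 0)))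
      = (\<Sum>y\<in>UNIV. (K * \<psi> x y) * (if y = a then 1 else 0)) + (\<Sum>y\<in>UNIV. (K * \<psi> x y) * (if y = b then c else 0))"
      by (simp only: distrib_left sum.distrib)
    also have "\<dots> = K * (\<psi> x a + c * \<psi> x b)"
      by (subst (1 2) sum_ind) (simp_all add: algebra_simps)
    finally show ?thesis .
  qed
  have "(\<Sum>x\<in>UNIV. \<Sum>y\<in>UNIV. cnj ((\<lambda>w. (if w = a then 1 else 0) + (if w = b then c else 0)) x) * \<psi> x y
           * (\<lambda>w. (if w = a then 1 else 0) + (if w = b then c else 0)) y)
      = (\<Sum>x\<in>UNIV. ((if x = a then 1 else 0) + (if x = b then cnj c else 0)) * (\<psi> x a + c * \<psi> x b))"
    by (rule sum.cong[OF refl]) (simp only: inner, simp)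
  also have "\<dots> = \<psi> a a + c * \<psi> a b + cnj c * \<psi> b a + cnj c * c * \<psi> b b"
  proof -
    have "(\<Sum>x\<in>UNIV. ((if x = a then 1 else 0) + (if x = b then cnj c else 0)) * (\<psi> x a + c * \<psi> x b))
      = (\<Sum>x\<in>UNIV. (if x = a then 1 else 0) * (\<psi> x a + c * \<psi> x b)) + (\<Sum>x\<in>UNIV. (if x = b then cnj c else 0) * (\<psi> x a + c * \<psi> x b))"
      by (simp only: distrib_right sum.distrib)
    also have "\<dots> = \<psi> a a + c * \<psi> a b + cnj c * \<psi> b a + cnj c * c * \<psi> b b"
      by (subst (1 2) sum_ind') (simp_all add: algebra_simps)
    finally show ?thesis .
  qed
  finally show ?thesis .
qed

lemma density_herm:
  fixes \<psi> :: "('n::finite, 'a::{finite,field}) mat"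
  assumes "density \<psi>"
  shows "\<psi> b a = cnj (\<psi> a b)"
proof -
  have D: "\<And>v. Im (\<Sum>x\<in>UNIV. \<Sum>y\<in>UNIV. cnj (v x) * \<psi> x y * v y) = 0"
    using assms unfolding density_def by blast
  have aa: "Im (\<psi> a a) = 0" using D[of "\<lambda>w. (if w = a then 1 else 0) + (if w = a then 0 else 0)"]
    unfolding qf_two by simp
  have bb: "Im (\<psi> b b) = 0" using D[of "\<lambda>w. (if w = b then 1 else 0) + (if w = b then 0 else 0)"]
    unfolding qf_two by simp
  have 1: "Im (\<psi> a b) + Im (\<psi> b a) = 0" using D[of "\<lambda>w. (if w = a then 1 else 0) + (if w = b then 1 else 0)"] aa bb
    unfolding qf_two by simp
  have 2: "Re (\<psi> a b) - Re (\<psi> b a) = 0" using D[of "\<lambda>w. (if w = a then 1 else 0) + (if w = b then \<i> else 0)"] aa bb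
    unfolding qf_two by simp
  show ?thesis using 1 2 by (simp add: complex_eq_iff)
qed


lemma sum_t_single:
  "(\<Sum>t\<in>cfg {i}. if (t::'n::finite \<Rightarrow> 'a::{finite,field}) i = z then (f::complex) else 0) = f"
proof -
  have "{t \<in> cfg {i}. t i = z} = {(\<lambda>j. if j = i then z else 0)}"
    by (auto simp: cfg_def)
  hence "(\<Sum>t\<in>cfg {i}. if (t::'n \<Rightarrow> 'a) i = z then f else 0) = (\<Sum>t\<in>{(\<lambda>j. if j = i then z else (0::'a))}. f)"
    by (simp add: sum.If_cases Int_def)
  thus ?thesis by simp
qed

theorem proposition2p19:
  fixes S :: "(('n::finite \<Rightarrow> 'a::{finite,field}) \<times> ('n \<Rightarrow> 'a)) set"
    and r :: nat
  assumes "stabilizer_group S"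
    and "\<forall>i. \<exists>P\<in>S. \<exists>Q\<in>S.
            card (pauli_supp P \<union> pauli_supp Q) \<le> r \<and>
            fst P i = 1 \<and> snd P i = 0 \<and> fst Q i = 0 \<and> snd Q i = 1"
  shows "locally_recoverable (stab_code S) r"
  unfolding locally_recoverable_def
proof
  fix i :: 'n
  obtain P Q where PS: "P \<in> S" and QS: "Q \<in> S" and card: "card (pauli_supp P \<union> pauli_supp Q) \<le> r"
    and h: "fst P i = 1" "snd P i = 0" "fst Q i = 0" "snd Q i = 1"
    using assms(2) by blast
  define \<alpha> where "\<alpha> = fst P"
  define \<beta> where "\<beta> = snd P"
  define \<gamma> where "\<gamma> = fst Q"
  define \<delta> where "\<delta> = snd Q"
  define I where "I = pauli_supp P \<union> pauli_supp Q"
  have iI: "i \<in> I" unfolding I_def pauli_supp_def using h by auto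
  have out: "\<forall>j. j \<notin> I \<longrightarrow> \<alpha> j = 0 \<and> \<beta> j = 0 \<and> \<gamma> j = 0 \<and> \<delta> j = 0"
    unfolding I_def pauli_supp_def \<alpha>_def \<beta>_def \<gamma>_def \<delta>_def by auto
  note hh = h[folded \<alpha>_def \<beta>_def \<gamma>_def \<delta>_def]
  note colA' = colA[where I=I and i=i and \<alpha>=\<alpha> and \<beta>=\<beta> and \<gamma>=\<gamma> and \<delta>=\<delta>, OF iI hh out]
  note complete' = complete[where I=I and i=i and \<alpha>=\<alpha> and \<beta>=\<beta> and \<gamma>=\<gamma> and \<delta>=\<delta>, OF iI hh out]
  obtain zs :: "'a list" where zs: "distinct zs" "set zs = UNIV"
    using finite_distinct_list[of "UNIV :: 'a set"] by auto
  define Ks where "Ks = map (\<lambda>z. Kr i \<alpha> \<beta> \<gamma> \<delta> z) zs"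
  define sq :: complex where "sq = of_real (sqrt (real CARD('a)))"
  have sqsq: "sq * sq = of_nat CARD('a)" unfolding sq_def by (simp flip: of_real_mult)
  have sq0: "sq \<noteq> 0" unfolding sq_def by simp
  have kraus: "kraus_channel (I - {i}) I Ks"
    unfolding kraus_channel_def Ks_def
  proof (intro ballI)
    fix y y' :: "'n \<Rightarrow> 'a" assume y: "y \<in> cfg (I - {i})" and y': "y' \<in> cfg (I - {i})"
    have "(\<Sum>K\<leftarrow>map (Kr i \<alpha> \<beta> \<gamma> \<delta>) zs. \<Sum>x\<in>cfg I. cnj (K x y) * K x y')
        = (\<Sum>z\<in>UNIV. \<Sum>x\<in>cfg I. cnj (Kr i \<alpha> \<beta> \<gamma> \<delta> z x y) * Kr i \<alpha> \<beta> \<gamma> \<delta> z x y')"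
      using zs by (simp add: sum_list_distinct_conv_sum_set o_def)
    also have "\<dots> = (if y = y' then 1 else 0)" by (rule complete'[OF y y'])
    finally show "(\<Sum>K\<leftarrow>map (Kr i \<alpha> \<beta> \<gamma> \<delta>) zs. \<Sum>x\<in>cfg I. cnj (K x y) * K x y') = (if y = y' then 1 else 0)" .
  qed
  have recov: "apply_rec I i Ks (reduced (- {i}) \<psi>) = \<psi>" if cs: "code_state (stab_code S) \<psi>" for \<psi>
  proof -
    have herm: "\<And>a b. \<psi> b a = cnj (\<psi> a b)" using cs density_herm unfolding code_state_def by blast
    have colS: "\<And>a. (\<lambda>w. \<psi> w a) \<in> stab_code S" using cs unfolding code_state_def by blast
    have scal: "\<And>c P. P \<in> S \<Longrightarrow> (\<lambda>j. c * fst P j, \<lambda>j. c * snd P j) \<in> S"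
      using assms(1) unfolding stabilizer_group_def by blast
    have RP: "\<And>c y. \<psi> y a = chi (\<Sum>j\<in>UNIV. (c * \<beta> j) * (y j - c * \<alpha> j)) * \<psi> (\<lambda>j. y j - c * \<alpha> j) a" for a
    proof -
      fix c y
      have "pauli (\<lambda>j. c * fst P j, \<lambda>j. c * snd P j) (\<lambda>w. \<psi> w a) = (\<lambda>w. \<psi> w a)"
        using colS[of a] scal[OF PS, of c] unfolding stab_code_def by blast
      hence "pauli (\<lambda>j. c * fst P j, \<lambda>j. c * snd P j) (\<lambda>w. \<psi> w a) y = \<psi> y a" by simp
      thus "\<psi> y a = chi (\<Sum>j\<in>UNIV. (c * \<beta> j) * (y j - c * \<alpha> j)) * \<psi> (\<lambda>j. y j - c * \<alpha> j) a"
        unfolding pauli_def \<alpha>_def \<beta>_def by simp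
    qed
    have RQ: "\<And>c y. \<psi> y a = chi (\<Sum>j\<in>UNIV. (c * \<delta> j) * (y j - c * \<gamma> j)) * \<psi> (\<lambda>j. y j - c * \<gamma> j) a" for a
    proof -
      fix c y
      have "pauli (\<lambda>j. c * fst Q j, \<lambda>j. c * snd Q j) (\<lambda>w. \<psi> w a) = (\<lambda>w. \<psi> w a)"
        using colS[of a] scal[OF QS, of c] unfolding stab_code_def by blast
      hence "pauli (\<lambda>j. c * fst Q j, \<lambda>j. c * snd Q j) (\<lambda>w. \<psi> w a) y = \<psi> y a" by simp
      thus "\<psi> y a = chi (\<Sum>j\<in>UNIV. (c * \<delta> j) * (y j - c * \<gamma> j)) * \<psi> (\<lambda>j. y j - c * \<gamma> j) a"
        unfolding pauli_def \<gamma>_def \<delta>_def by simp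
    qed
    note A = colA'[where g="\<lambda>w. \<psi> w a" for a, OF RP RQ, folded sq_def]
    show ?thesis
    proof (intro ext)
      fix x x'
      define G :: "('n \<Rightarrow> 'a) \<Rightarrow> ('n \<Rightarrow> 'a) \<Rightarrow> ('n \<Rightarrow> 'a) \<Rightarrow> ('n \<Rightarrow> 'a)" where "G x t y = merge (-{i}) (merge (I - {i}) y x) t" for x t y
      define Kz where "Kz z = Kr i \<alpha> \<beta> \<gamma> \<delta> z" for z
      have per_z: "(\<Sum>y\<in>cfg (I - {i}). \<Sum>y'\<in>cfg (I - {i}).
            Kz z (restr I x) y * (\<Sum>t\<in>cfg {i}. \<psi> (G x t y) (G x' t y')) * cnj (Kz z (restr I x') y'))
          = \<psi> x x' / of_nat CARD('a)" for z
      proof -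
        have inner: "(\<Sum>y'\<in>cfg (I - {i}). \<psi> a (G x' t y') * cnj (Kz z (restr I x') y'))
            = (if t i = z then \<psi> a x' / sq else 0)" for a t
        proof -
          have "(\<Sum>y'\<in>cfg (I - {i}). \<psi> a (G x' t y') * cnj (Kz z (restr I x') y'))
              = cnj (\<Sum>y'\<in>cfg (I - {i}). Kz z (restr I x') y' * \<psi> (G x' t y') a)"
            by (simp add: cnj_sum herm[of _ a] mult.commute)
          also have "\<dots> = cnj (if t i = z then \<psi> x' a / sq else 0)"
            unfolding Kz_def G_def by (subst A) (rule refl)
          also have "\<dots> = (if t i = z then \<psi> a x' / sq else 0)"
            by (simp add: herm[of a x'] sq_def)
          finally show ?thesis .
        qed
        have "(\<Sum>y\<in>cfg (I - {i}). \<Sum>y'\<in>cfg (I - {i}).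
            Kz z (restr I x) y * (\<Sum>t\<in>cfg {i}. \<psi> (G x t y) (G x' t y')) * cnj (Kz z (restr I x') y'))
          = (\<Sum>y\<in>cfg (I - {i}). \<Sum>t\<in>cfg {i}. Kz z (restr I x) y *
               (\<Sum>y'\<in>cfg (I - {i}). \<psi> (G x t y) (G x' t y') * cnj (Kz z (restr I x') y')))"
        proof (rule sum.cong[OF refl])
          fix y
          have "(\<Sum>y'\<in>cfg (I - {i}). Kz z (restr I x) y * (\<Sum>t\<in>cfg {i}. \<psi> (G x t y) (G x' t y')) * cnj (Kz z (restr I x') y'))
              = (\<Sum>y'\<in>cfg (I - {i}). \<Sum>t\<in>cfg {i}. Kz z (restr I x) y * (\<psi> (G x t y) (G x' t y') * cnj (Kz z (restr I x') y')))"
            by (simp add: sum_distrib_left sum_distrib_right mult.assoc)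
          also have "\<dots> = (\<Sum>t\<in>cfg {i}. \<Sum>y'\<in>cfg (I - {i}). Kz z (restr I x) y * (\<psi> (G x t y) (G x' t y') * cnj (Kz z (restr I x') y')))"
            by (rule sum.swap)
          also have "\<dots> = (\<Sum>t\<in>cfg {i}. Kz z (restr I x) y *
               (\<Sum>y'\<in>cfg (I - {i}). \<psi> (G x t y) (G x' t y') * cnj (Kz z (restr I x') y')))"
            by (simp add: sum_distrib_left)
          finally show "(\<Sum>y'\<in>cfg (I - {i}). Kz z (restr I x) y * (\<Sum>t\<in>cfg {i}. \<psi> (G x t y) (G x' t y')) * cnj (Kz z (restr I x') y'))
            = (\<Sum>t\<in>cfg {i}. Kz z (restr I x) y *
               (\<Sum>y'\<in>cfg (I - {i}). \<psi> (G x t y) (G x' t y') * cnj (Kz z (restr I x') y')))" .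
        qed
        also have "\<dots> = (\<Sum>y\<in>cfg (I - {i}). \<Sum>t\<in>cfg {i}. Kz z (restr I x) y * (if t i = z then \<psi> (G x t y) x' / sq else 0))"
          by (simp only: inner)
        also have "\<dots> = (\<Sum>t\<in>cfg {i}. \<Sum>y\<in>cfg (I - {i}). Kz z (restr I x) y * (if t i = z then \<psi> (G x t y) x' / sq else 0))"
          by (rule sum.swap)
        also have "\<dots> = (\<Sum>t\<in>cfg {i}. if t i = z then (\<Sum>y\<in>cfg (I - {i}). Kz z (restr I x) y * \<psi> (G x t y) x') / sq else 0)"
          by (intro sum.cong refl) (simp add: sum_divide_distrib)
        also have "\<dots> = (\<Sum>t\<in>cfg {i}. if t i = z then \<psi> x x' / (sq * sq) else 0)"
          unfolding Kz_def G_def by (intro sum.cong refl) (subst A, simp)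
        also have "\<dots> = \<psi> x x' / of_nat CARD('a)" unfolding sqsq by (rule sum_t_single)
        finally show ?thesis .
      qed
      have "apply_rec I i Ks (reduced (- {i}) \<psi>) x x'
          = (\<Sum>z\<in>UNIV. \<Sum>y\<in>cfg (I - {i}). \<Sum>y'\<in>cfg (I - {i}).
            Kz z (restr I x) y * (\<Sum>t\<in>cfg {i}. \<psi> (G x t y) (G x' t y')) * cnj (Kz z (restr I x') y'))"
        unfolding apply_rec_def reduced_def Ks_def Kz_def G_def using zs
        by (simp add: sum_list_distinct_conv_sum_set o_def)
      also have "\<dots> = (\<Sum>z\<in>(UNIV::'a set). \<psi> x x' / of_nat CARD('a))" by (simp only: per_z)
      also have "\<dots> = \<psi> x x'" by simp
      finally show "apply_rec I i Ks (reduced (- {i}) \<psi>) x x' = \<psi> x x'" .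
    qed
  qed
  have "card I \<le> r" unfolding I_def using card .
  thus "\<exists>I. i \<in> I \<and> card I \<le> r \<and> (\<exists>Ks. kraus_channel (I - {i}) I Ks \<and>
           (\<forall>\<psi>. code_state (stab_code S) \<psi> \<longrightarrow> apply_rec I i Ks (reduced (- {i}) \<psi>) = \<psi>))"
    using iI kraus recov by blast
qed
end
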